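(* Let $\Gamma=(V,E)$ be a metric graph with $V=\{v_1,\dots,v_n\}$ and $E=\{e_1,\dots,e_m\}$, where $e_j$ has endpoints $v_{j(1)},v_{j(2)}$ ($1\le j(1),j(2)\le n$) and length $M_j>0$. Let $D$ be a vertex-supported divisor on $\Gamma$ with $d_i=D(v_i)$. Let $f$ be a rational function on $\Gamma$ with at most two linear pieces on each edge of $\Gamma$; write $a_i=f(v_i)$, and let $s_{j,1},s_{j,2}$ be the outgoing slopes of $f$ along $e_j$ at $v_{j(1)}$ and at $v_{j(2)}$ respectively. Then $f\in R(D)$ if and only if (a) for each $1\le i\le n$: $d_i+\sum_{j:\,j(1)=i}s_{j,1}+\sum_{j:\,j(2)=i}s_{j,2}\ge 0$; and (b) for each $1\le j\le m$, either $s_{j,1}+s_{j,2}=0$ and $a_{j(1)}-a_{j(2)}+s_{j,1}M_j=0$, or $s_{j,1}+s_{j,2}<0$ and $s_{j,2}M_j<a_{j(1)}-a_{j(2)}<-s_{j,1}M_j$.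
   Context: A metric graph is a connected undirected graph (loops and parallel edges allowed) whose edges have positive real lengths, each edge viewed as a real segment. A divisor is a finite formal $\mathbb{Z}$-combination of points of $\Gamma$; it is vertex-supported if its support is contained in $V$. A rational function is a continuous $f:\Gamma\to\mathbb{R}$, piecewise linear on each edge with finitely many pieces and integer slopes; $\mathrm{ord}_x(f)$ is the sum of the outgoing slopes of $f$ at $x$ over all directions, and $(f)=\sum_x\mathrm{ord}_x(f)x$. $R(D)$ is the set of rational functions $f$ such that $D+(f)$ is effective (all coefficients $\ge 0$). *)

theory Defs
  imports Complex_Main
begin

text \<open>Combinatorial data of a metric graph: vertices are 0..n-1, edges are 0..m-1;
 edge j has endpoints src j (= j(1)) and tgt j (= j(2)) and length M j > 0.
 Edge j is identified with the segment [0, M j], with 0 at src j and M j at tgt j.\<close>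

definition metric_graph ::
  "nat \<Rightarrow> nat \<Rightarrow> (nat \<Rightarrow> nat) \<Rightarrow> (nat \<Rightarrow> nat) \<Rightarrow> (nat \<Rightarrow> real) \<Rightarrow> bool" where
  "metric_graph n m src tgt M \<longleftrightarrow>
     n \<ge> 1 \<and> (\<forall>j<m. src j < n \<and> tgt j < n \<and> M j > 0) \<and>
     (\<forall>i<n. \<forall>k<n. (i, k) \<in> ({(src j, tgt j) | j. j < m} \<union> {(tgt j, src j) | j. j < m})\<^sup>*)"

definition pl_pieces :: "real \<Rightarrow> (real \<Rightarrow> real) \<Rightarrow> nat \<Rightarrow> bool" where
  "pl_pieces L g k \<longleftrightarrow> k \<ge> 1 \<and> (\<exists>(x :: nat \<Rightarrow> real) (c :: nat \<Rightarrow> int).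
     x 0 = 0 \<and> x k = L \<and> (\<forall>i<k. x i < x (Suc i)) \<and>
     (\<forall>i<k. \<forall>t\<in>{x i .. x (Suc i)}. g t = g (x i) + of_int (c i) * (t - x i)))"

definition rational_fn ::
  "nat \<Rightarrow> (nat \<Rightarrow> nat) \<Rightarrow> (nat \<Rightarrow> nat) \<Rightarrow> (nat \<Rightarrow> real)
   \<Rightarrow> (nat \<Rightarrow> real) \<Rightarrow> (nat \<Rightarrow> real \<Rightarrow> real) \<Rightarrow> bool" where
  "rational_fn m src tgt M a g \<longleftrightarrow>
     (\<forall>j<m. g j 0 = a (src j) \<and> g j (M j) = a (tgt j) \<and> (\<exists>k. pl_pieces (M j) (g j) k))"

definition slope_up :: "(real \<Rightarrow> real) \<Rightarrow> real \<Rightarrow> real" where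
  "slope_up h t = Lim (at_right 0) (\<lambda>s. (h (t + s) - h t) / s)"

definition slope_down :: "(real \<Rightarrow> real) \<Rightarrow> real \<Rightarrow> real" where
  "slope_down h t = Lim (at_right 0) (\<lambda>s. (h (t - s) - h t) / s)"

text \<open>ord at vertex i: sum of outgoing slopes over all directions (a loop contributes twice).\<close>
definition ord_vertex ::
  "nat \<Rightarrow> (nat \<Rightarrow> nat) \<Rightarrow> (nat \<Rightarrow> nat) \<Rightarrow> (nat \<Rightarrow> real) \<Rightarrow> (nat \<Rightarrow> real \<Rightarrow> real) \<Rightarrow> nat \<Rightarrow> real" where
  "ord_vertex m src tgt M g i =
     (\<Sum>j\<in>{j. j < m \<and> src j = i}. slope_up (g j) 0) +
     (\<Sum>j\<in>{j. j < m \<and> tgt j = i}. slope_down (g j) (M j))"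

definition ord_interior :: "(nat \<Rightarrow> real \<Rightarrow> real) \<Rightarrow> nat \<Rightarrow> real \<Rightarrow> real" where
  "ord_interior g j t = slope_up (g j) t + slope_down (g j) t"

definition in_R ::
  "nat \<Rightarrow> nat \<Rightarrow> (nat \<Rightarrow> nat) \<Rightarrow> (nat \<Rightarrow> nat) \<Rightarrow> (nat \<Rightarrow> real) \<Rightarrow> (nat \<Rightarrow> int)
   \<Rightarrow> (nat \<Rightarrow> real) \<Rightarrow> (nat \<Rightarrow> real \<Rightarrow> real) \<Rightarrow> bool" where
  "in_R n m src tgt M d a g \<longleftrightarrow>
     rational_fn m src tgt M a g \<and>
     (\<forall>i<n. of_int (d i) + ord_vertex m src tgt M g i \<ge> 0) \<and>
     (\<forall>j<m. \<forall>t\<in>{0<..<M j}. ord_interior g j t \<ge> 0)"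

end

theory Submission imports Defs begin
lemma slope_up_lin:
  assumes "x \<le> t" "t < y" "\<forall>u\<in>{x..y}. h u = h x + c*(u - x)"
  shows "slope_up h t = c"
proof -
  have ev: "eventually (\<lambda>s. (h (t + s) - h t) / s = c) (at_right 0)"
    unfolding eventually_at_right_field
  proof (intro exI[of _ "y - t"] conjI allI impI)
    fix s :: real assume "0 < s" "s < y - t"
    then have "t + s \<in> {x..y}" "t \<in> {x..y}" using assms(1,2) by auto
    then have "h (t+s) = h x + c*(t+s-x)" "h t = h x + c*(t-x)"
      using assms(3) by blast+
    then show "(h (t + s) - h t) / s = c" using \<open>0<s\<close> by (simp add: field_simps)
  qed (use assms in simp)
  have "((\<lambda>s. (h (t + s) - h t) / s) \<longlongrightarrow> c) (at_right 0)"
    using tendsto_eventually[OF ev] by simp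
  then show ?thesis unfolding slope_up_def by (rule tendsto_Lim[OF trivial_limit_at_right_real])
qed
lemma slope_down_lin:
  assumes "x < t" "t \<le> y" "\<forall>u\<in>{x..y}. h u = h x + c*(u - x)"
  shows "slope_down h t = - c"
proof -
  have ev: "eventually (\<lambda>s. (h (t - s) - h t) / s = -c) (at_right 0)"
    unfolding eventually_at_right_field
  proof (intro exI[of _ "t - x"] conjI allI impI)
    fix s :: real assume "0 < s" "s < t - x"
    then have "t - s \<in> {x..y}" "t \<in> {x..y}" using assms(1,2) by auto
    then have "h (t-s) = h x + c*(t-s-x)" "h t = h x + c*(t-x)"
      using assms(3) by blast+
    then show "(h (t - s) - h t) / s = -c" using \<open>0<s\<close> by (simp add: field_simps)
  qed (use assms in simp)
  have "((\<lambda>s. (h (t - s) - h t) / s) \<longlongrightarrow> -c) (at_right 0)"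
    using tendsto_eventually[OF ev] by simp
  then show ?thesis unfolding slope_down_def by (rule tendsto_Lim[OF trivial_limit_at_right_real])
qed

lemma edge:
  fixes h :: "real \<Rightarrow> real"
  assumes M: "L > 0" and h0: "h 0 = A" and hM: "h L = B" and pl: "pl_pieces L h k" and k2: "k \<le> 2"
  shows "(\<forall>t\<in>{0<..<L}. slope_up h t + slope_down h t \<ge> 0) \<longleftrightarrow>
    (let s1 = slope_up h 0; s2 = slope_down h L in
        (s1 + s2 = 0 \<and> A - B + s1 * L = 0) \<or>
        (s1 + s2 < 0 \<and> s2 * L < A - B \<and> A - B < - s1 * L))"
proof -
  obtain x :: "nat \<Rightarrow> real" and c :: "nat \<Rightarrow> int" where k1: "k \<ge> 1" and x0: "x 0 = 0" and xk: "x k = L"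
    and inc: "\<forall>i<k. x i < x (Suc i)"
    and lin: "\<forall>i<k. \<forall>t\<in>{x i .. x (Suc i)}. h t = h (x i) + of_int (c i) * (t - x i)"
  proof -
    have "k \<ge> 1 \<and> (\<exists>(x :: nat \<Rightarrow> real) (c :: nat \<Rightarrow> int).
     x 0 = 0 \<and> x k = L \<and> (\<forall>i<k. x i < x (Suc i)) \<and>
     (\<forall>i<k. \<forall>t\<in>{x i .. x (Suc i)}. h t = h (x i) + of_int (c i) * (t - x i)))"
      using pl unfolding pl_pieces_def .
    then show ?thesis using that by (elim conjE exE) assumption
  qed
  have "k = 1 \<or> k = 2" using k1 k2 by auto
  then show ?thesis
  proof
    assume k: "k = 1"
    have k0: "0 < k" "Suc 0 = k" using k by auto
    have L0: "\<forall>t\<in>{x 0..x (Suc 0)}. h t = h (x 0) + of_int (c 0) * (t - x 0)"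
      using lin k0(1) by blast
    have l0: "\<forall>u\<in>{0..L}. h u = h 0 + of_int (c 0) * (u - 0)"
      using L0 unfolding x0 k0(2) xk .
    have u: "\<And>t. 0 \<le> t \<Longrightarrow> t < L \<Longrightarrow> slope_up h t = c 0"
      using slope_up_lin[OF _ _ l0] by auto
    have d: "\<And>t. 0 < t \<Longrightarrow> t \<le> L \<Longrightarrow> slope_down h t = - c 0"
      using slope_down_lin[OF _ _ l0] by auto
    have B: "B = A + c 0 * L" proof -
      have "L \<in> {0..L}" using M by simp
      then have "h L = h 0 + of_int (c 0) * (L - 0)" using l0 by blast
      then show ?thesis using h0 hM by simp
    qed
    have s1: "slope_up h 0 = c 0" using u M by simp
    have s2: "slope_down h L = - c 0" using d M by simp
    have "\<forall>t\<in>{0<..<L}. slope_up h t + slope_down h t \<ge> 0"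
    proof
      fix t assume t: "t \<in> {0<..<L}"
      have "slope_up h t = c 0" "slope_down h t = - c 0" using u[of t] d[of t] t by auto
      then show "slope_up h t + slope_down h t \<ge> 0" by simp
    qed
    then show ?thesis unfolding Let_def s1 s2 B by simp
  next
    assume k: "k = 2"
    define p where "p = x 1"
    have i0: "x 0 < x 1" using inc k by auto
    have i1: "x 1 < x 2" using inc[rule_format, of 1] k by (simp add: numeral_2_eq_2)
    have p: "0 < p" "p < L" using i0 i1 x0 xk k unfolding p_def by auto
    have k0: "0 < k" "1 < k" "Suc 1 = k" using k by auto
    have L0: "\<forall>t\<in>{x 0..x (Suc 0)}. h t = h (x 0) + of_int (c 0) * (t - x 0)"
      using lin k0(1) by blast
    have L1: "\<forall>t\<in>{x 1..x (Suc 1)}. h t = h (x 1) + of_int (c 1) * (t - x 1)"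
      using lin k0(2) by blast
    have l0: "\<forall>u\<in>{0..p}. h u = h 0 + of_int (c 0) * (u - 0)"
      using L0 unfolding x0 One_nat_def[symmetric] p_def[symmetric] .
    have l1: "\<forall>u\<in>{p..L}. h u = h p + of_int (c 1) * (u - p)"
      using L1 unfolding k0(3) xk p_def[symmetric] .
    have u0: "\<And>t. 0 \<le> t \<Longrightarrow> t < p \<Longrightarrow> slope_up h t = c 0"
      using slope_up_lin[OF _ _ l0] by auto
    have d0: "\<And>t. 0 < t \<Longrightarrow> t \<le> p \<Longrightarrow> slope_down h t = - c 0"
      using slope_down_lin[OF _ _ l0] by auto
    have u1: "\<And>t. p \<le> t \<Longrightarrow> t < L \<Longrightarrow> slope_up h t = c 1"
      using slope_up_lin[OF _ _ l1] by auto
    have d1: "\<And>t. p < t \<Longrightarrow> t \<le> L \<Longrightarrow> slope_down h t = - c 1"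
      using slope_down_lin[OF _ _ l1] by auto
    have B: "B = A + c 0 * p + c 1 * (L - p)" proof -
      have "L \<in> {p..L}" "p \<in> {0..p}" using p by auto
      then have "h L = h p + of_int (c 1) * (L - p)" "h p = h 0 + of_int (c 0) * (p - 0)"
        using l0 l1 by blast+
      then show ?thesis using h0 hM by simp
    qed
    have lhs: "(\<forall>t\<in>{0<..<L}. slope_up h t + slope_down h t \<ge> 0) \<longleftrightarrow> c 0 \<le> c 1"
    proof
      assume "\<forall>t\<in>{0<..<L}. slope_up h t + slope_down h t \<ge> 0"
      then have "slope_up h p + slope_down h p \<ge> 0" using p by auto
      then show "c 0 \<le> c 1" using u1[of p] d0[of p] p by auto
    next
      assume c: "c 0 \<le> c 1"
      show "\<forall>t\<in>{0<..<L}. slope_up h t + slope_down h t \<ge> 0"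
      proof
        fix t assume t: "t \<in> {0<..<L}"
        consider "t < p" | "t = p" | "t > p" by linarith
        then show "slope_up h t + slope_down h t \<ge> 0"
        proof cases
          case 1
          then have "slope_up h t = c 0" "slope_down h t = - c 0" using u0[of t] d0[of t] t by auto
          then show ?thesis by simp
        next
          case 2
          then have "slope_up h t = c 1" "slope_down h t = - c 0" using u1[of t] d0[of t] t p by auto
          then show ?thesis using c by simp
        next
          case 3
          then have "slope_up h t = c 1" "slope_down h t = - c 1" using u1[of t] d1[of t] t by auto
          then show ?thesis by simp
        qed
      qed
    qed
    have s1: "slope_up h 0 = c 0" using u0 p by auto
    have s2: "slope_down h L = - c 1" using d1 p by auto
    show ?thesis
    proof (cases "c 0 = c 1")
      case True
      then show ?thesis unfolding lhs Let_def s1 s2 B by (simp add: algebra_simps)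
    next
      case False
      show ?thesis
      proof (cases "c 0 < c 1")
        case True
        have "(real_of_int (c 1) - c 0) * p > 0" "(real_of_int (c 1) - c 0) * (L - p) > 0"
          using True p by auto
        then have "- real_of_int (c 1) * L < A - B" "A - B < - real_of_int (c 0) * L"
          unfolding B by (simp_all add: algebra_simps)
        then show ?thesis using True unfolding lhs Let_def s1 s2 by simp
      next
        case F2: False
        then show ?thesis using False unfolding lhs Let_def s1 s2 by auto
      qed
    qed
  qed
qed

theorem lemma2p18:
  fixes n m :: nat and src tgt :: "nat \<Rightarrow> nat" and M :: "nat \<Rightarrow> real"
    and d :: "nat \<Rightarrow> int" and a :: "nat \<Rightarrow> real" and g :: "nat \<Rightarrow> real \<Rightarrow> real"
  assumes "metric_graph n m src tgt M"
    and "rational_fn m src tgt M a g"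
    and "\<forall>j<m. \<exists>k\<le>2. pl_pieces (M j) (g j) k"
  shows "in_R n m src tgt M d a g \<longleftrightarrow>
    ((\<forall>i<n. of_int (d i) + (\<Sum>j\<in>{j. j < m \<and> src j = i}. slope_up (g j) 0)
                         + (\<Sum>j\<in>{j. j < m \<and> tgt j = i}. slope_down (g j) (M j)) \<ge> 0) \<and>
     (\<forall>j<m. let s1 = slope_up (g j) 0; s2 = slope_down (g j) (M j) in
        (s1 + s2 = 0 \<and> a (src j) - a (tgt j) + s1 * M j = 0) \<or>
        (s1 + s2 < 0 \<and> s2 * M j < a (src j) - a (tgt j) \<and> a (src j) - a (tgt j) < - s1 * M j)))"
proof -
  have E: "\<And>j. j < m \<Longrightarrow> (\<forall>t\<in>{0<..<M j}. ord_interior g j t \<ge> 0) \<longleftrightarrow>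
     (let s1 = slope_up (g j) 0; s2 = slope_down (g j) (M j) in
        (s1 + s2 = 0 \<and> a (src j) - a (tgt j) + s1 * M j = 0) \<or>
        (s1 + s2 < 0 \<and> s2 * M j < a (src j) - a (tgt j) \<and> a (src j) - a (tgt j) < - s1 * M j))"
  proof -
    fix j assume j: "j < m"
    obtain k where "k \<le> 2" "pl_pieces (M j) (g j) k" using assms(3) j by blast
    moreover have "M j > 0" using assms(1) j unfolding metric_graph_def by auto
    moreover have "g j 0 = a (src j)" "g j (M j) = a (tgt j)"
      using assms(2) j unfolding rational_fn_def by auto
    ultimately show "?thesis j" unfolding ord_interior_def by (intro edge) auto
  qed
  have V: "(\<forall>i<n. of_int (d i) + ord_vertex m src tgt M g i \<ge> 0) \<longleftrightarrow>
    (\<forall>i<n. of_int (d i) + (\<Sum>j\<in>{j. j < m \<and> src j = i}. slope_up (g j) 0)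
                         + (\<Sum>j\<in>{j. j < m \<and> tgt j = i}. slope_down (g j) (M j)) \<ge> 0)"
    unfolding ord_vertex_def by (simp add: add.assoc)
  have I: "(\<forall>j<m. \<forall>t\<in>{0<..<M j}. ord_interior g j t \<ge> 0) \<longleftrightarrow>
     (\<forall>j<m. let s1 = slope_up (g j) 0; s2 = slope_down (g j) (M j) in
        (s1 + s2 = 0 \<and> a (src j) - a (tgt j) + s1 * M j = 0) \<or>
        (s1 + s2 < 0 \<and> s2 * M j < a (src j) - a (tgt j) \<and> a (src j) - a (tgt j) < - s1 * M j))"
    using E by blast
  show ?thesis unfolding in_R_def V I using assms(2) by blast
qed

end
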